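(* In the setting of the context (with $p>L$), for every $t\ge0$ the iterates of Smoothed-GDA satisfy $$d(y^{t+1},z^{t+1})-d(y^t,z^t)\ge\langle\nabla_yK(x(y^t,z^t),z^t;y^t),\,y^{t+1}-y^t\rangle-\frac{L_d}{2}\|y^t-y^{t+1}\|^2+\frac p2(z^{t+1}-z^t)^T\big(z^{t+1}+z^t-2x(y^{t+1},z^{t+1})\big),$$ where $L_d=L+L\sigma_2$, $\sigma_2=\frac{2(p+L)}{p-L}$, and $\nabla_yK(x(y^t,z^t),z^t;y^t)=\nabla_yd(y^t,z^t)$.
   Context: $X\subseteq\mathbb{R}^n$ nonempty closed convex, $Y\subseteq\mathbb{R}^m$ nonempty closed convex compact, $f$ continuously differentiable with $f(x,\cdot)$ concave, $\nabla_xf,\nabla_yf$ $L$-Lipschitz. $K(x,z;y)=f(x,y)+\frac p2\|x-z\|^2$, $x(y,z)=\arg\min_{x\in X}K(x,z;y)$, $d(y,z)=\min_{x\in X}K(x,z;y)$. Smoothed-GDA with $c,\alpha>0$, $0<\beta\le1$: $x^{t+1}=P_X(x^t-c\nabla_xK(x^t,z^t;y^t))$, $y^{t+1}=P_Y(y^t+\alpha\nabla_yK(x^{t+1},z^t;y^t))$, $z^{t+1}=z^t+\beta(x^{t+1}-z^t)$ ($P_S$ Euclidean projection). *)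

theory Defs
  imports "HOL-Analysis.Analysis"
begin

definition Kfun :: "('a::euclidean_space \<Rightarrow> 'b::euclidean_space \<Rightarrow> real) \<Rightarrow> real \<Rightarrow> 'a \<Rightarrow> 'a \<Rightarrow> 'b \<Rightarrow> real"
  where "Kfun f p x z y = f x y + p / 2 * (norm (x - z))\<^sup>2"

text \<open>x(y,z) = argmin over X of K(.,z;y) (unique when p > L).\<close>
definition xopt :: "('a::euclidean_space \<Rightarrow> 'b::euclidean_space \<Rightarrow> real) \<Rightarrow> real \<Rightarrow> 'a set \<Rightarrow> 'b \<Rightarrow> 'a \<Rightarrow> 'a"
  where "xopt f p X y z = (THE x. x \<in> X \<and> (\<forall>x'\<in>X. Kfun f p x z y \<le> Kfun f p x' z y))"

definition dfun :: "('a::euclidean_space \<Rightarrow> 'b::euclidean_space \<Rightarrow> real) \<Rightarrow> real \<Rightarrow> 'a set \<Rightarrow> 'b \<Rightarrow> 'a \<Rightarrow> real"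
  where "dfun f p X y z = Inf ((\<lambda>x. Kfun f p x z y) ` X)"

end

theory Submission imports Defs begin

lemma t1: fixes a b x1 x2 z :: "'a::euclidean_space" and p :: real
  shows "(a + p *\<^sub>R (x1 - z)) \<bullet> (x2 - x1) + (b + p *\<^sub>R (x2 - z)) \<bullet> (x1 - x2) = (a - b) \<bullet> (x2 - x1) - p * (norm (x1 - x2))\<^sup>2"
proof -
  have e: "x1 - x2 = - (x2 - x1)" by simp
  have "(a + p *\<^sub>R (x1 - z)) \<bullet> (x2 - x1) + (b + p *\<^sub>R (x2 - z)) \<bullet> (x1 - x2)
      = (a + p *\<^sub>R (x1 - z) - (b + p *\<^sub>R (x2 - z))) \<bullet> (x2 - x1)"
    by (subst e) (simp only: inner_minus_right inner_diff_left)
  also have "a + p *\<^sub>R (x1 - z) - (b + p *\<^sub>R (x2 - z)) = (a - b) - p *\<^sub>R (x2 - x1)"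
    by (simp add: algebra_simps)
  also have "((a - b) - p *\<^sub>R (x2 - x1)) \<bullet> (x2 - x1) = (a - b) \<bullet> (x2 - x1) - p * (norm (x2 - x1))\<^sup>2"
    by (simp add: inner_diff_left power2_norm_eq_inner)
  finally show ?thesis by (simp add: norm_minus_commute)
qed

locale sg =
  fixes f :: "'a::euclidean_space \<Rightarrow> 'b::euclidean_space \<Rightarrow> real"
    and gx :: "'a \<Rightarrow> 'b \<Rightarrow> 'a" and gy :: "'a \<Rightarrow> 'b \<Rightarrow> 'b"
    and X :: "'a set" and L p :: real
  assumes grad: "\<And>x y. ((\<lambda>(u, v). f u v) has_derivative (\<lambda>(u, v). gx x y \<bullet> u + gy x y \<bullet> v)) (at (x, y))"
    and conc: "\<And>x. concave_on UNIV (f x)"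
    and Lip_x: "\<And>x y x' y'. norm (gx x y - gx x' y') \<le> L * norm ((x, y) - (x', y'))"
    and Lip_y: "\<And>x y x' y'. norm (gy x y - gy x' y') \<le> L * norm ((x, y) - (x', y'))"
    and pL: "p > L"
    and Xne: "X \<noteq> {}" and Xcl: "closed X" and Xcv: "convex X"
begin

lemma L_nonneg: "0 \<le> L"
proof -
  obtain a :: 'a where a: "a \<in> Basis" using nonempty_Basis by blast
  then have "a \<noteq> 0" by auto
  have "0 \<le> L * norm ((a, 0::'b) - (0, 0))" using Lip_x[of a 0 0 0] norm_ge_zero order_trans by blast
  moreover have "norm ((a, 0::'b) - (0, 0)) > 0" using \<open>a \<noteq> 0\<close> by simp
  ultimately show ?thesis by (simp add: zero_le_mult_iff)
qed

lemma Lx1: "norm (gx x y - gx x' y) \<le> L * norm (x - x')"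
  using Lip_x[of x y x' y] by (simp add: norm_Pair)

lemma Ly2: "norm (gy x y - gy x' y') \<le> L * (norm (x - x') + norm (y - y'))"
proof -
  have "norm ((x, y) - (x', y')) \<le> norm (x - x') + norm (y - y')"
    using norm_Pair_le[of "x - x'" "y - y'"] by simp
  then show ?thesis using Lip_y[of x y x' y'] L_nonneg
    by (meson mult_left_mono order_trans)
qed

lemma Lx2: "norm (gx x y - gx x' y') \<le> L * (norm (x - x') + norm (y - y'))"
proof -
  have "norm ((x, y) - (x', y')) \<le> norm (x - x') + norm (y - y')"
    using norm_Pair_le[of "x - x'" "y - y'"] by simp
  then show ?thesis using Lip_x[of x y x' y'] L_nonneg
    by (meson mult_left_mono order_trans)
qed

lemma deriv_x: "((\<lambda>s. f (a + s *\<^sub>R d) y) has_real_derivative (gx (a + s *\<^sub>R d) y \<bullet> d)) (at s)"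
proof -
  have 1: "((\<lambda>s. (a + s *\<^sub>R d, y)) has_derivative (\<lambda>h. (h *\<^sub>R d, 0))) (at s)"
    by (auto intro!: derivative_eq_intros)
  have "((\<lambda>s. (\<lambda>(u, v). f u v) (a + s *\<^sub>R d, y)) has_derivative
      (\<lambda>h. (\<lambda>(u, v). gx (a + s *\<^sub>R d) y \<bullet> u + gy (a + s *\<^sub>R d) y \<bullet> v) (h *\<^sub>R d, 0))) (at s)"
    by (rule has_derivative_compose[OF 1 grad])
  then have "((\<lambda>s. f (a + s *\<^sub>R d) y) has_derivative (\<lambda>h. h * (gx (a + s *\<^sub>R d) y \<bullet> d))) (at s)" by simp
  then show ?thesis unfolding has_field_derivative_def
    by (rule has_derivative_eq_rhs) (auto simp: fun_eq_iff)
qed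

lemma deriv_y: "((\<lambda>s. f x (a + s *\<^sub>R d)) has_real_derivative (gy x (a + s *\<^sub>R d) \<bullet> d)) (at s)"
proof -
  have 1: "((\<lambda>s. (x, a + s *\<^sub>R d)) has_derivative (\<lambda>h. (0, h *\<^sub>R d))) (at s)"
    by (auto intro!: derivative_eq_intros)
  have "((\<lambda>s. (\<lambda>(u, v). f u v) (x, a + s *\<^sub>R d)) has_derivative
      (\<lambda>h. (\<lambda>(u, v). gx x (a + s *\<^sub>R d) \<bullet> u + gy x (a + s *\<^sub>R d) \<bullet> v) (0, h *\<^sub>R d))) (at s)"
    by (rule has_derivative_compose[OF 1 grad])
  then have "((\<lambda>s. f x (a + s *\<^sub>R d)) has_derivative (\<lambda>h. h * (gy x (a + s *\<^sub>R d) \<bullet> d))) (at s)" by simp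
  then show ?thesis unfolding has_field_derivative_def
    by (rule has_derivative_eq_rhs) (auto simp: fun_eq_iff)
qed

lemma descent_lo: "f (a + d) y - f a y - gx a y \<bullet> d \<ge> - L / 2 * (norm d)\<^sup>2"
proof -
  let ?g = "\<lambda>s. f (a + s *\<^sub>R d) y - s * (gx a y \<bullet> d) + L / 2 * s\<^sup>2 * (norm d)\<^sup>2"
  have "?g 0 \<le> ?g 1"
  proof (rule DERIV_nonneg_imp_nondecreasing[where f = ?g])
    fix s :: real assume s: "0 \<le> s" "s \<le> 1"
    have D: "(?g has_real_derivative (gx (a + s *\<^sub>R d) y \<bullet> d - gx a y \<bullet> d + L * s * (norm d)\<^sup>2)) (at s)"
      by (auto intro!: derivative_eq_intros deriv_x)
    have "\<bar>(gx (a + s *\<^sub>R d) y - gx a y) \<bullet> d\<bar> \<le> norm (gx (a + s *\<^sub>R d) y - gx a y) * norm d"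
      by (rule Cauchy_Schwarz_ineq2)
    also have "\<dots> \<le> L * norm (s *\<^sub>R d) * norm d"
      using Lx1[of "a + s *\<^sub>R d" y a] by (simp add: mult_right_mono)
    also have "\<dots> = L * s * (norm d)\<^sup>2" using s by (simp add: power2_eq_square)
    finally have "gx (a + s *\<^sub>R d) y \<bullet> d - gx a y \<bullet> d + L * s * (norm d)\<^sup>2 \<ge> 0"
      by (simp add: inner_diff_left)
    with D show "\<exists>y. DERIV ?g s :> y \<and> y \<ge> 0" by blast
  qed simp
  then show ?thesis by simp
qed

lemma descent_hi: "f (a + d) y - f a y - gx a y \<bullet> d \<le> L / 2 * (norm d)\<^sup>2"
proof -
  let ?g = "\<lambda>s. - f (a + s *\<^sub>R d) y + s * (gx a y \<bullet> d) + L / 2 * s\<^sup>2 * (norm d)\<^sup>2"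
  have "?g 0 \<le> ?g 1"
  proof (rule DERIV_nonneg_imp_nondecreasing[where f = ?g])
    fix s :: real assume s: "0 \<le> s" "s \<le> 1"
    have D: "(?g has_real_derivative (- (gx (a + s *\<^sub>R d) y \<bullet> d) + gx a y \<bullet> d + L * s * (norm d)\<^sup>2)) (at s)"
      by (auto intro!: derivative_eq_intros deriv_x)
    have "\<bar>(gx (a + s *\<^sub>R d) y - gx a y) \<bullet> d\<bar> \<le> norm (gx (a + s *\<^sub>R d) y - gx a y) * norm d"
      by (rule Cauchy_Schwarz_ineq2)
    also have "\<dots> \<le> L * norm (s *\<^sub>R d) * norm d"
      using Lx1[of "a + s *\<^sub>R d" y a] by (simp add: mult_right_mono)
    also have "\<dots> = L * s * (norm d)\<^sup>2" using s by (simp add: power2_eq_square)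
    finally have "- (gx (a + s *\<^sub>R d) y \<bullet> d) + gx a y \<bullet> d + L * s * (norm d)\<^sup>2 \<ge> 0"
      by (simp add: inner_diff_left)
    with D show "\<exists>y. DERIV ?g s :> y \<and> y \<ge> 0" by blast
  qed simp
  then show ?thesis by simp
qed

lemma tangent_y: "f x b - f x a \<le> gy x a \<bullet> (b - a)"
proof -
  let ?g = "\<lambda>s. - f x (a + s *\<^sub>R (b - a))"
  have cv: "convex_on UNIV ?g"
    unfolding convex_on_def
  proof (intro conjI ballI allI impI)
    fix u v :: real and s1 s2 :: real assume uv: "u \<ge> 0" "v \<ge> 0" "u + v = 1"
    have eq: "a + (u *\<^sub>R s1 + v *\<^sub>R s2) *\<^sub>R (b - a) = u *\<^sub>R (a + s1 *\<^sub>R (b - a)) + v *\<^sub>R (a + s2 *\<^sub>R (b - a))"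
      using uv by (simp add: algebra_simps flip: scaleR_add_left)
    have "f x (u *\<^sub>R (a + s1 *\<^sub>R (b - a)) + v *\<^sub>R (a + s2 *\<^sub>R (b - a))) \<ge>
        u * f x (a + s1 *\<^sub>R (b - a)) + v * f x (a + s2 *\<^sub>R (b - a))"
      using conc[of x] uv unfolding concave_on_iff by auto
    then show "?g (u *\<^sub>R s1 + v *\<^sub>R s2) \<le> u * ?g s1 + v * ?g s2"
      using eq by simp
  qed simp
  have D: "(?g has_real_derivative (- (gy x (a + 0 *\<^sub>R (b - a)) \<bullet> (b - a)))) (at 0 within UNIV)"
    by (intro derivative_intros deriv_y)
  have "?g 1 - ?g 0 \<ge> (- (gy x (a + 0 *\<^sub>R (b - a)) \<bullet> (b - a))) * (1 - 0)"
    by (rule convex_on_imp_above_tangent[OF cv _ _ _ D]) auto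
  then show ?thesis by simp
qed


abbreviation "K x z y \<equiv> Kfun f p x z y"
abbreviation "gK x z y \<equiv> gx x y + p *\<^sub>R (x - z)"

lemma sq_diff: "(norm (a + d - z))\<^sup>2 - (norm (a - z))\<^sup>2 = 2 * ((a - z) \<bullet> d) + (norm d)\<^sup>2"
proof -
  have "a + d - z = (a - z) + d" by simp
  then show ?thesis
    by (simp only:) (simp add: power2_norm_eq_inner inner_add_left inner_add_right inner_commute)
qed

lemma K_expand: "K (a + d) z y - K a z y - gK a z y \<bullet> d = (f (a + d) y - f a y - gx a y \<bullet> d) + p / 2 * (norm d)\<^sup>2"
proof -
  have "K (a + d) z y - K a z y = f (a + d) y - f a y + p / 2 * ((norm (a + d - z))\<^sup>2 - (norm (a - z))\<^sup>2)"
    unfolding Kfun_def by (simp add: algebra_simps)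
  also have "\<dots> = f (a + d) y - f a y + p * ((a - z) \<bullet> d) + p / 2 * (norm d)\<^sup>2"
    by (simp add: sq_diff algebra_simps)
  finally show ?thesis by (simp add: inner_add_left algebra_simps)
qed

lemma K_lo: "K (a + d) z y - K a z y - gK a z y \<bullet> d \<ge> (p - L) / 2 * (norm d)\<^sup>2"
proof -
  have "(p - L) / 2 * (norm d)\<^sup>2 = - L / 2 * (norm d)\<^sup>2 + p / 2 * (norm d)\<^sup>2" by (simp add: field_simps)
  then show ?thesis using K_expand[where a=a and d=d and z=z and y=y] descent_lo[where a=a and d=d and y=y] by linarith
qed

lemma K_hi: "K (a + d) z y - K a z y - gK a z y \<bullet> d \<le> (p + L) / 2 * (norm d)\<^sup>2"
proof -
  have "(p + L) / 2 * (norm d)\<^sup>2 = L / 2 * (norm d)\<^sup>2 + p / 2 * (norm d)\<^sup>2" by (simp add: field_simps)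
  then show ?thesis using K_expand[where a=a and d=d and z=z and y=y] descent_hi[where a=a and d=d and y=y] by linarith
qed

lemma K_lo': "K w z y \<ge> K a z y + gK a z y \<bullet> (w - a) + (p - L) / 2 * (norm (w - a))\<^sup>2"
  using K_lo[where a=a and d="w - a" and z=z and y=y] by simp

lemma K_cont: "continuous_on S (\<lambda>x. K x z y)"
proof -
  have "isCont (\<lambda>x. f x y) x" for x
  proof -
    have "isCont (\<lambda>w. (\<lambda>(u,v). f u v) (w, y)) x"
      using isCont_o2[where f="\<lambda>w. (w, y)" and a=x and g="\<lambda>(u,v). f u v"] has_derivative_continuous[OF grad] by auto
    then show ?thesis by simp
  qed
  then have "continuous_on S (\<lambda>x. f x y)" by (simp add: continuous_at_imp_continuous_on)
  then show ?thesis unfolding Kfun_def by (auto intro!: continuous_intros)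
qed

lemma min_exists: "\<exists>x\<in>X. \<forall>w\<in>X. K x z y \<le> K w z y"
proof -
  obtain x0 where x0: "x0 \<in> X" using Xne by blast
  define G where "G = norm (gK x0 z y)"
  define \<mu> where "\<mu> = (p - L) / 2"
  have mu: "\<mu> > 0" using pL by (simp add: \<mu>_def)
  have G: "G \<ge> 0" by (simp add: G_def)
  define S where "S = X \<inter> cball x0 (G / \<mu>)"
  have cS: "compact S" unfolding S_def by (intro closed_Int_compact Xcl compact_cball)
  have "G / \<mu> \<ge> 0" using G mu by simp
  then have x0S: "x0 \<in> S" using x0 unfolding S_def by simp
  then have neS: "S \<noteq> {}" by blast
  obtain x1 where x1: "x1 \<in> S" "\<And>w. w \<in> S \<Longrightarrow> K x1 z y \<le> K w z y"
    using continuous_attains_inf[OF cS neS K_cont] by blast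
  have "K x1 z y \<le> K w z y" if w: "w \<in> X" for w
  proof (cases "w \<in> S")
    case True then show ?thesis using x1 by blast
  next
    case False
    define r where "r = norm (w - x0)"
    have "\<not> dist x0 w \<le> G / \<mu>" using False w unfolding S_def by simp
    then have r: "r > G / \<mu>" unfolding r_def dist_norm by (simp add: norm_minus_commute)
    have "\<bar>gK x0 z y \<bullet> (w - x0)\<bar> \<le> G * r"
      unfolding G_def r_def by (rule Cauchy_Schwarz_ineq2)
    then have i1: "gK x0 z y \<bullet> (w - x0) \<ge> - G * r" by linarith
    have i2: "K w z y \<ge> K x0 z y + gK x0 z y \<bullet> (w - x0) + \<mu> * r\<^sup>2"
      using K_lo'[where a=x0 and z=z and y=y and w=w] unfolding \<mu>_def r_def .
    have "\<mu> * r \<ge> G" using r mu by (simp add: field_simps)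
    moreover have "r \<ge> 0" by (simp add: r_def)
    ultimately have "(\<mu> * r - G) * r \<ge> 0" by simp
    then have i3: "\<mu> * r\<^sup>2 - G * r \<ge> 0" by (simp add: algebra_simps power2_eq_square)
    have "K w z y \<ge> K x0 z y" using i1 i2 i3 by linarith
    then show ?thesis using x1(2)[OF x0S] by linarith
  qed
  moreover have "x1 \<in> X" using x1(1) unfolding S_def by blast
  ultimately show ?thesis by blast
qed

lemma var_ineq:
  assumes x1: "x1 \<in> X" "\<And>w. w \<in> X \<Longrightarrow> K x1 z y \<le> K w z y" and w: "w \<in> X"
  shows "gK x1 z y \<bullet> (w - x1) \<ge> 0"
proof (rule ccontr)
  define d where "d = w - x1"
  define g where "g = gK x1 z y \<bullet> d"
  define C where "C = (p + L) / 2 * (norm d)\<^sup>2 + 1"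
  assume "\<not> ?thesis"
  then have g: "g < 0" by (simp add: g_def d_def)
  have "(p + L) / 2 * (norm d)\<^sup>2 \<ge> 0" using pL L_nonneg by simp
  then have C: "C > 0" by (simp add: C_def)
  define s where "s = min 1 (- g / (2 * C))"
  have "- g / (2 * C) > 0" using divide_neg_pos[of g "2 * C"] g C by simp
  then have s: "0 < s" "s \<le> 1" by (auto simp: s_def)
  have "s \<le> - g / (2 * C)" by (simp add: s_def)
  then have "s * C \<le> (- g / (2 * C)) * C" using C by (intro mult_right_mono) auto
  also have "\<dots> = - g / 2" using C by (simp add: field_simps)
  finally have sC: "s * C \<le> - g / 2" .
  have "x1 + s *\<^sub>R d \<in> X"
  proof -
    have "x1 + s *\<^sub>R d = (1 - s) *\<^sub>R x1 + s *\<^sub>R w" by (simp add: d_def algebra_simps)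
    then show ?thesis using convexD[OF Xcv x1(1) w, of "1 - s" s] s by simp
  qed
  then have "K (x1 + s *\<^sub>R d) z y \<ge> K x1 z y" using x1(2) by blast
  moreover have "K (x1 + s *\<^sub>R d) z y - K x1 z y - gK x1 z y \<bullet> (s *\<^sub>R d) \<le> (p + L) / 2 * (norm (s *\<^sub>R d))\<^sup>2"
    by (rule K_hi)
  ultimately have "0 \<le> s * g + (p + L) / 2 * (s\<^sup>2 * (norm d)\<^sup>2)"
    by (simp add: g_def power_mult_distrib)
  also have "\<dots> \<le> s * g + s * (s * C)"
    using s by (simp add: C_def power2_eq_square algebra_simps)
  finally have "0 \<le> s * (g + s * C)" by (simp add: algebra_simps)
  then have "0 \<le> g + s * C" using s by (simp add: zero_le_mult_iff)
  then show False using sC g by linarith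
qed

lemma min_unique:
  assumes "x1 \<in> X" "\<And>w. w \<in> X \<Longrightarrow> K x1 z y \<le> K w z y"
    and "x2 \<in> X" "\<And>w. w \<in> X \<Longrightarrow> K x2 z y \<le> K w z y"
  shows "x1 = x2"
proof -
  have "gK x1 z y \<bullet> (x2 - x1) \<ge> 0" by (rule var_ineq[OF assms(1,2) assms(3)])
  then have "K x2 z y \<ge> K x1 z y + (p - L) / 2 * (norm (x2 - x1))\<^sup>2"
    using K_lo'[where a=x1 and z=z and y=y and w=x2] by simp
  moreover have "K x2 z y \<le> K x1 z y" using assms by blast
  ultimately have "(p - L) / 2 * (norm (x2 - x1))\<^sup>2 \<le> 0" by simp
  then have "(norm (x2 - x1))\<^sup>2 \<le> 0" using pL by (simp add: mult_le_0_iff)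
  then show ?thesis by simp
qed

lemma xopt_min: "xopt f p X y z \<in> X" "\<And>w. w \<in> X \<Longrightarrow> K (xopt f p X y z) z y \<le> K w z y"
proof -
  have ex1: "\<exists>!x. x \<in> X \<and> (\<forall>x'\<in>X. K x z y \<le> K x' z y)"
    using min_exists[where z=z and y=y] min_unique[where z=z and y=y] by metis
  have "xopt f p X y z \<in> X \<and> (\<forall>x'\<in>X. K (xopt f p X y z) z y \<le> K x' z y)"
    unfolding xopt_def by (rule theI'[OF ex1])
  then show "xopt f p X y z \<in> X" "\<And>w. w \<in> X \<Longrightarrow> K (xopt f p X y z) z y \<le> K w z y" by auto
qed

lemma dfun_eq: "dfun f p X y z = K (xopt f p X y z) z y"
  unfolding dfun_def using xopt_min[where y=y and z=z] by (intro cInf_eq_minimum) auto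

lemma dfun_le: "w \<in> X \<Longrightarrow> dfun f p X y z \<le> K w z y"
  unfolding dfun_eq by (rule xopt_min(2))


lemma xopt_lip: "norm (xopt f p X y1 z - xopt f p X y2 z) \<le> L / (p - L) * norm (y1 - y2)"
proof -
  define x1 where "x1 = xopt f p X y1 z"
  define x2 where "x2 = xopt f p X y2 z"
  have v1: "gK x1 z y1 \<bullet> (x2 - x1) \<ge> 0" unfolding x1_def x2_def
    by (rule var_ineq[OF xopt_min(1) xopt_min(2) xopt_min(1)])
  have v2: "gK x2 z y2 \<bullet> (x1 - x2) \<ge> 0" unfolding x1_def x2_def
    by (rule var_ineq[OF xopt_min(1) xopt_min(2) xopt_min(1)])
  define n where "n = norm (x1 - x2)"
  define m where "m = norm (y1 - y2)"
  have id: "gK x1 z y1 \<bullet> (x2 - x1) + gK x2 z y2 \<bullet> (x1 - x2) = (gx x1 y1 - gx x2 y2) \<bullet> (x2 - x1) - p * n\<^sup>2"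
    unfolding n_def by (rule t1)
  have "(gx x1 y1 - gx x2 y2) \<bullet> (x2 - x1) \<le> norm (gx x1 y1 - gx x2 y2) * norm (x2 - x1)"
    by (rule norm_cauchy_schwarz)
  also have "\<dots> \<le> L * (n + m) * n"
    using Lx2[of x1 y1 x2 y2] by (simp add: n_def m_def norm_minus_commute mult_right_mono)
  finally have "p * n\<^sup>2 \<le> L * (n + m) * n" using v1 v2 id by linarith
  then have "(p - L) * n * n \<le> L * m * n" by (simp add: algebra_simps power2_eq_square)
  moreover have "n \<ge> 0" by (simp add: n_def)
  ultimately have "(p - L) * n \<le> L * m"
  proof (cases "n = 0")
    case True then show ?thesis using L_nonneg by (simp add: m_def)
  next
    case False
    then have "n > 0" using \<open>n \<ge> 0\<close> by simp
    then show ?thesis using \<open>(p - L) * n * n \<le> L * m * n\<close> by (simp add: mult_le_cancel_right_pos)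
  qed
  then have "n \<le> L * m / (p - L)" using pL by (simp add: pos_le_divide_eq mult.commute)
  then show ?thesis by (simp add: n_def m_def x1_def x2_def)
qed

lemma d_y_hi: "dfun f p X y' z - dfun f p X y z \<le> gy (xopt f p X y z) y \<bullet> (y' - y)"
proof -
  define x where "x = xopt f p X y z"
  have "dfun f p X y' z \<le> K x z y'" unfolding x_def by (rule dfun_le[OF xopt_min(1)])
  moreover have "dfun f p X y z = K x z y" unfolding x_def by (rule dfun_eq)
  moreover have "f x y' - f x y \<le> gy x y \<bullet> (y' - y)" by (rule tangent_y)
  ultimately show ?thesis unfolding Kfun_def x_def by simp
qed

lemma d_y_lo: "dfun f p X y' z - dfun f p X y z \<ge> gy (xopt f p X y z) y \<bullet> (y' - y) - L * (1 + L / (p - L)) * (norm (y' - y))\<^sup>2"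
proof -
  define x1 where "x1 = xopt f p X y' z"
  define x0 where "x0 = xopt f p X y z"
  define m where "m = norm (y' - y)"
  have "dfun f p X y z \<le> K x1 z y" unfolding x1_def by (rule dfun_le[OF xopt_min(1)])
  moreover have "dfun f p X y' z = K x1 z y'" unfolding x1_def by (rule dfun_eq)
  moreover have "f x1 y - f x1 y' \<le> gy x1 y' \<bullet> (y - y')" by (rule tangent_y)
  ultimately have 1: "dfun f p X y' z - dfun f p X y z \<ge> gy x1 y' \<bullet> (y' - y)"
    unfolding Kfun_def by (simp add: inner_diff_right)
  have "\<bar>(gy x1 y' - gy x0 y) \<bullet> (y' - y)\<bar> \<le> norm (gy x1 y' - gy x0 y) * m"
    unfolding m_def by (rule Cauchy_Schwarz_ineq2)
  also have "\<dots> \<le> L * (norm (x1 - x0) + m) * m"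
    using Ly2[of x1 y' x0 y] by (simp add: m_def mult_right_mono)
  also have "\<dots> \<le> L * (L / (p - L) * m + m) * m"
    using xopt_lip[of y' z y] L_nonneg by (auto simp: x1_def x0_def m_def intro!: mult_right_mono mult_left_mono)
  also have "\<dots> = L * (1 + L / (p - L)) * m\<^sup>2" by (simp add: algebra_simps power2_eq_square)
  finally have "gy x1 y' \<bullet> (y' - y) \<ge> gy x0 y \<bullet> (y' - y) - L * (1 + L / (p - L)) * m\<^sup>2"
    by (simp add: inner_diff_left)
  with 1 show ?thesis by (simp add: x0_def m_def)
qed

lemma d_z: "dfun f p X y z' - dfun f p X y z \<ge> p / 2 * ((z' - z) \<bullet> (z' + z - 2 *\<^sub>R xopt f p X y z'))"
proof -
  define x where "x = xopt f p X y z'"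
  have "dfun f p X y z \<le> K x z y" unfolding x_def by (rule dfun_le[OF xopt_min(1)])
  moreover have "dfun f p X y z' = K x z' y" unfolding x_def by (rule dfun_eq)
  moreover have i1: "(norm (x - z'))\<^sup>2 - (norm (x - z))\<^sup>2 = (z' - z) \<bullet> (z' + z - 2 *\<^sub>R x)"
    by (simp add: power2_norm_eq_inner inner_simps algebra_simps inner_commute)
  moreover have i2: "K x z' y - K x z y = p / 2 * ((norm (x - z'))\<^sup>2 - (norm (x - z))\<^sup>2)"
    unfolding Kfun_def by (simp add: algebra_simps)
  ultimately have "K x z' y - K x z y = p / 2 * ((z' - z) \<bullet> (z' + z - 2 *\<^sub>R x))" by (simp only: i1 i2)
  moreover note dd = \<open>dfun f p X y z \<le> K x z y\<close> \<open>dfun f p X y z' = K x z' y\<close>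
  ultimately show ?thesis unfolding x_def by linarith
qed

lemma d_deriv: "((\<lambda>y'. dfun f p X y' z) has_derivative (\<lambda>v. gy (xopt f p X y z) y \<bullet> v)) (at y)"
  unfolding has_derivative_at_alt
proof (intro conjI allI impI)
  show "bounded_linear (\<lambda>v. gy (xopt f p X y z) y \<bullet> v)" by (rule bounded_linear_inner_right)
  fix e :: real assume e: "e > 0"
  define C where "C = L * (1 + L / (p - L))"
  have C: "C \<ge> 0" using L_nonneg pL by (simp add: C_def)
  show "\<exists>d>0. \<forall>y'. norm (y' - y) < d \<longrightarrow>
      norm (dfun f p X y' z - dfun f p X y z - gy (xopt f p X y z) y \<bullet> (y' - y)) \<le> e * norm (y' - y)"
  proof (intro exI[of _ "e / (C + 1)"] conjI allI impI)
    show "e / (C + 1) > 0" using e C by simp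
    fix y' assume y': "norm (y' - y) < e / (C + 1)"
    have "C * norm (y' - y) \<le> e"
    proof -
      have "C * norm (y' - y) \<le> (C + 1) * norm (y' - y)" by (simp add: distrib_right)
      also have "\<dots> \<le> (C + 1) * (e / (C + 1))" using y' C by (intro mult_left_mono) auto
      also have "\<dots> = e" using C by simp
      finally show ?thesis .
    qed
    then have b: "C * (norm (y' - y))\<^sup>2 \<le> e * norm (y' - y)"
      by (simp add: power2_eq_square mult.assoc[symmetric] mult_right_mono)
    show "norm (dfun f p X y' z - dfun f p X y z - gy (xopt f p X y z) y \<bullet> (y' - y)) \<le> e * norm (y' - y)"
      using d_y_hi[where y'=y' and z=z and y=y] d_y_lo[where y'=y' and z=z and y=y] b
      unfolding C_def real_norm_def abs_le_iff by (intro conjI) linarith+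
  qed
qed

end

lemma coef: "(L::real) \<ge> 0 \<Longrightarrow> p > L \<Longrightarrow> L * (1 + L / (p - L)) \<le> (L + L * (2 * (p + L) / (p - L))) / 2"
proof -
  assume L: "L \<ge> 0" and pL: "p > L"
  have e1: "L * (1 + L / (p - L)) = L * p / (p - L)" using pL by (simp add: field_simps)
  have e2: "(L + L * (2 * (p + L) / (p - L))) / 2 = (L * (3 * p + L)) / (2 * (p - L))" using pL by (simp add: field_simps)
  have e3: "L * p / (p - L) \<le> (L * (3 * p + L)) / (2 * (p - L))"
  proof -
    have "2 * (L * p) \<le> L * (3 * p + L)" using L pL by (simp add: algebra_simps mult_nonneg_nonneg)
    have eq: "L * p / (p - L) = (2 * (L * p)) / (2 * (p - L))"
      by (rule mult_divide_mult_cancel_left[symmetric]) simp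
    show ?thesis unfolding eq
      using \<open>2 * (L * p) \<le> L * (3 * p + L)\<close> pL by (intro divide_right_mono) auto
  qed
  show ?thesis unfolding e1 e2 by (rule e3)
qed

theorem lemma7:
  fixes f :: "'a::euclidean_space \<Rightarrow> 'b::euclidean_space \<Rightarrow> real"
    and gx :: "'a \<Rightarrow> 'b \<Rightarrow> 'a" and gy :: "'a \<Rightarrow> 'b \<Rightarrow> 'b"
    and X :: "'a set" and Y :: "'b set"
    and L p c \<alpha> \<beta> :: real
    and xs zs :: "nat \<Rightarrow> 'a" and ys :: "nat \<Rightarrow> 'b"
    and t :: nat
  assumes X: "X \<noteq> {}" "closed X" "convex X"
    and Y: "Y \<noteq> {}" "closed Y" "convex Y" "compact Y"
    and grad: "\<And>x y. ((\<lambda>(u, v). f u v) has_derivative (\<lambda>(u, v). gx x y \<bullet> u + gy x y \<bullet> v)) (at (x, y))"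
    and cont_gx: "continuous_on UNIV (\<lambda>(x, y). gx x y)"
    and cont_gy: "continuous_on UNIV (\<lambda>(x, y). gy x y)"
    and conc: "\<And>x. concave_on UNIV (f x)"
    and Lip_x: "\<And>x y x' y'. norm (gx x y - gx x' y') \<le> L * norm ((x, y) - (x', y'))"
    and Lip_y: "\<And>x y x' y'. norm (gy x y - gy x' y') \<le> L * norm ((x, y) - (x', y'))"
    and pL: "p > L"
    and c: "c > 0" and \<alpha>: "\<alpha> > 0" and \<beta>: "0 < \<beta>" "\<beta> \<le> 1"
    and init: "xs 0 \<in> X" "ys 0 \<in> Y"
    and upd_x: "\<And>s. xs (Suc s) = closest_point X (xs s - c *\<^sub>R (gx (xs s) (ys s) + p *\<^sub>R (xs s - zs s)))"
    and upd_y: "\<And>s. ys (Suc s) = closest_point Y (ys s + \<alpha> *\<^sub>R gy (xs (Suc s)) (ys s))"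
    and upd_z: "\<And>s. zs (Suc s) = zs s + \<beta> *\<^sub>R (xs (Suc s) - zs s)"
  shows "(dfun f p X (ys (Suc t)) (zs (Suc t)) - dfun f p X (ys t) (zs t)
      \<ge> gy (xopt f p X (ys t) (zs t)) (ys t) \<bullet> (ys (Suc t) - ys t)
         - (L + L * (2 * (p + L) / (p - L))) / 2 * (norm (ys t - ys (Suc t)))\<^sup>2
         + p / 2 * ((zs (Suc t) - zs t) \<bullet> (zs (Suc t) + zs t - 2 *\<^sub>R xopt f p X (ys (Suc t)) (zs (Suc t))))) \<and>
      ((\<lambda>y. dfun f p X y (zs t)) has_derivative (\<lambda>v. gy (xopt f p X (ys t) (zs t)) (ys t) \<bullet> v)) (at (ys t))"
proof -
  interpret sg f gx gy X L p
    using grad conc Lip_x Lip_y pL X by unfold_locales auto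
  have L0: "0 \<le> L" by (rule L_nonneg)
  have A: "dfun f p X (ys (Suc t)) (zs (Suc t)) - dfun f p X (ys (Suc t)) (zs t)
      \<ge> p / 2 * ((zs (Suc t) - zs t) \<bullet> (zs (Suc t) + zs t - 2 *\<^sub>R xopt f p X (ys (Suc t)) (zs (Suc t))))"
    by (rule d_z)
  have B: "dfun f p X (ys (Suc t)) (zs t) - dfun f p X (ys t) (zs t)
      \<ge> gy (xopt f p X (ys t) (zs t)) (ys t) \<bullet> (ys (Suc t) - ys t) - L * (1 + L / (p - L)) * (norm (ys (Suc t) - ys t))\<^sup>2"
    by (rule d_y_lo)
  have "L * (1 + L / (p - L)) * (norm (ys (Suc t) - ys t))\<^sup>2 \<le> (L + L * (2 * (p + L) / (p - L))) / 2 * (norm (ys (Suc t) - ys t))\<^sup>2"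
    using coef[OF L0 pL] by (rule mult_right_mono) simp
  moreover have nm: "norm (ys t - ys (Suc t)) = norm (ys (Suc t) - ys t)" by (rule norm_minus_commute)
  ultimately have "dfun f p X (ys (Suc t)) (zs (Suc t)) - dfun f p X (ys t) (zs t)
      \<ge> gy (xopt f p X (ys t) (zs t)) (ys t) \<bullet> (ys (Suc t) - ys t)
         - (L + L * (2 * (p + L) / (p - L))) / 2 * (norm (ys t - ys (Suc t)))\<^sup>2
         + p / 2 * ((zs (Suc t) - zs t) \<bullet> (zs (Suc t) + zs t - 2 *\<^sub>R xopt f p X (ys (Suc t)) (zs (Suc t))))"
    using A B unfolding nm by linarith
  moreover have "((\<lambda>y. dfun f p X y (zs t)) has_derivative (\<lambda>v. gy (xopt f p X (ys t) (zs t)) (ys t) \<bullet> v)) (at (ys t))"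
    by (rule d_deriv)
  ultimately show ?thesis by blast
qed

end
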